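(* Let $p>2$ be an even integer. The $p$-frame potential $PFP_p(\mu)=\iint_{\mathbb{R}^d\times\mathbb{R}^d}|\langle x,y\rangle|^p\,d\mu(x)\,d\mu(y)$ is strongly differentiable at every $\mu\in P_p(\mathbb{R}^d)$, with gradient plan $(\iota,g^\mu_p)_\#\mu$, where $g^\mu_p(x):=2p\int_{\mathbb{R}^d}\langle x,u\rangle^{p-1}u\,d\mu(u)$.
   Context: $P_p(\mathbb{R}^d)$ is the set of Borel probability measures on $\mathbb{R}^d$ with finite $p$-th moment; $\iota$ is the identity map and $(\iota,g)_\#\mu$ the pushforward of $\mu$ under $x\mapsto(x,g(x))$. Let $q=p/(p-1)$. For $\gamma\in P(\mathbb{R}^d\times\mathbb{R}^d)$ and $\nu\in P_p(\mathbb{R}^d)$, $\Gamma(\gamma,\nu)$ denotes the set of probability measures $\beta$ on $(\mathbb{R}^d)^3$ with $(\pi^1,\pi^2)_\#\beta=\gamma$ and $\pi^3_\#\beta=\nu$, and for $\mu=\pi^1_\#\gamma$, $C_{p,\beta}(\mu,\nu)=\big(\iiint\|x_1-x_3\|^p\,d\beta\big)^{1/p}$. A functional $F:P_p(\mathbb{R}^d)\to\mathbb{R}$ is strongly differentiable at $\mu$ with gradient plan $\gamma$ (where $\pi^1_\#\gamma=\mu$ and $\iint\|x_2\|^q d\gamma<\infty$) if for every $\nu\in P_p(\mathbb{R}^d)$ and every $\beta\in\Gamma(\gamma,\nu)$, $F(\nu)-F(\mu)=\iiint\langle x_2,x_3-x_1\rangle\,d\beta(x_1,x_2,x_3)+R_\beta$,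 where $|R_\beta|\le\omega(C_{p,\beta}(\mu,\nu))$ for a function $\omega$ depending only on $\mu$ with $\omega(r)/r\to0$ as $r\to0$. *)

theory Defs
  imports "HOL-Probability.Probability"
begin

definition Pp :: "real \<Rightarrow> ('a::euclidean_space) measure set" where
  "Pp p = {\<mu>. prob_space \<mu> \<and> sets \<mu> = sets borel \<and>
              (\<integral>\<^sup>+ x. ennreal (norm x powr p) \<partial>\<mu>) < \<infinity>}"

definition borel_prob :: "('b::topological_space) measure \<Rightarrow> bool" where
  "borel_prob m \<longleftrightarrow> prob_space m \<and> sets m = sets borel"

definition Gamma_set :: "('a::euclidean_space \<times> 'a) measure \<Rightarrow> 'a measure
      \<Rightarrow> ('a \<times> 'a \<times> 'a) measure set" where
  "Gamma_set \<gamma> \<nu> = {\<beta>. borel_prob \<beta> \<and>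
       distr \<beta> borel (\<lambda>(x1, x2, x3). (x1, x2)) = \<gamma> \<and>
       distr \<beta> borel (\<lambda>(x1, x2, x3). x3) = \<nu>}"

definition Cpb :: "real \<Rightarrow> ('a::euclidean_space \<times> 'a \<times> 'a) measure \<Rightarrow> real" where
  "Cpb p \<beta> = enn2real (\<integral>\<^sup>+ z. ennreal (norm (fst z - snd (snd z)) powr p) \<partial>\<beta>) powr (1 / p)"

definition strongly_differentiable ::
  "real \<Rightarrow> ('a::euclidean_space measure \<Rightarrow> real) \<Rightarrow> 'a measure \<Rightarrow> ('a \<times> 'a) measure \<Rightarrow> bool" where
  "strongly_differentiable p F \<mu> \<gamma> \<longleftrightarrow>
     borel_prob \<gamma> \<and> distr \<gamma> borel fst = \<mu> \<and>
     (\<integral>\<^sup>+ z. ennreal (norm (snd z) powr (p / (p - 1))) \<partial>\<gamma>) < \<infinity> \<and>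
     (\<exists>\<omega> :: real \<Rightarrow> real. ((\<lambda>r. \<omega> r / r) \<longlongrightarrow> 0) (at_right 0) \<and>
        (\<forall>\<nu>\<in>Pp p. \<forall>\<beta>\<in>Gamma_set \<gamma> \<nu>.
           \<bar>F \<nu> - F \<mu> - (\<integral>z. (fst (snd z)) \<bullet> (snd (snd z) - fst z) \<partial>\<beta>)\<bar> \<le> \<omega> (Cpb p \<beta>)))"

definition PFP :: "nat \<Rightarrow> 'a::euclidean_space measure \<Rightarrow> real" where
  "PFP p \<mu> = (\<integral>x. (\<integral>y. \<bar>x \<bullet> y\<bar> ^ p \<partial>\<mu>) \<partial>\<mu>)"

definition gPFP :: "nat \<Rightarrow> 'a::euclidean_space measure \<Rightarrow> 'a \<Rightarrow> 'a" where
  "gPFP p \<mu> x = (2 * real p) *\<^sub>R (\<integral>u. ((x \<bullet> u) ^ (p - 1)) *\<^sub>R u \<partial>\<mu>)"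

end

theory Submission
  imports Defs
begin


lemma young_max:
  fixes s t :: real assumes "0 \<le> s" "0 \<le> t" "j \<le> p"
  shows "s ^ j * t ^ (p - j) \<le> s ^ p + t ^ p"
proof (cases "s \<le> t")
  case True
  have "s ^ j * t ^ (p - j) \<le> t ^ j * t ^ (p - j)"
    by (intro mult_right_mono power_mono) (use assms True in auto)
  also have "\<dots> = t ^ p" using assms by (simp flip: power_add)
  finally show ?thesis using assms by (smt (verit) zero_le_power)
next
  case False
  have "s ^ j * t ^ (p - j) \<le> s ^ j * s ^ (p - j)"
    by (intro mult_left_mono power_mono) (use assms False in auto)
  also have "\<dots> = s ^ p" using assms by (simp flip: power_add)
  finally show ?thesis using assms by (smt (verit) zero_le_power)
qed

lemma sum_pow_le:
  fixes u v :: real assumes "0 \<le> u" "0 \<le> v"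
  shows "(u + v) ^ p \<le> 2 ^ p * (u ^ p + v ^ p)"
proof (cases "u \<le> v")
  case True
  have "(u + v) ^ p \<le> (2 * v) ^ p" by (intro power_mono) (use assms True in auto)
  also have "\<dots> = 2 ^ p * v ^ p" by (simp add: power_mult_distrib)
  also have "\<dots> \<le> 2 ^ p * (u ^ p + v ^ p)" using assms by (intro mult_left_mono) auto
  finally show ?thesis .
next
  case False
  have "(u + v) ^ p \<le> (2 * u) ^ p" by (intro power_mono) (use assms False in auto)
  also have "\<dots> = 2 ^ p * u ^ p" by (simp add: power_mult_distrib)
  also have "\<dots> \<le> 2 ^ p * (u ^ p + v ^ p)" using assms by (intro mult_left_mono) auto
  finally show ?thesis .
qed

lemma taylor_aux:
  fixes a b M :: real assumes "\<bar>a\<bar> \<le> M" "\<bar>b\<bar> \<le> M"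
  shows "\<bar>b ^ Suc n - a ^ Suc n - real (Suc n) * a ^ n * (b - a)\<bar> \<le> real n ^ 2 * (b - a)^2 * M ^ (n - 1)"
proof (induction n)
  case 0 then show ?case by simp
next
  case (Suc n)
  have M0: "0 \<le> M" using assms by linarith
  have eq: "b ^ Suc (Suc n) - a ^ Suc (Suc n) - real (Suc (Suc n)) * a ^ Suc n * (b - a)
     = b * (b ^ Suc n - a ^ Suc n - real (Suc n) * a ^ n * (b - a)) + real (Suc n) * a ^ n * (b-a)^2"
    by (simp add: algebra_simps power2_eq_square)
  have an: "\<bar>a ^ n\<bar> \<le> M ^ n" unfolding power_abs by (intro power_mono) (use assms in auto)
  have "\<bar>b ^ Suc (Suc n) - a ^ Suc (Suc n) - real (Suc (Suc n)) * a ^ Suc n * (b - a)\<bar>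
     \<le> \<bar>b\<bar> * \<bar>b ^ Suc n - a ^ Suc n - real (Suc n) * a ^ n * (b - a)\<bar> + real (Suc n) * \<bar>a ^ n\<bar> * (b-a)^2"
    unfolding eq by (simp add: abs_mult abs_triangle_ineq[THEN order_trans])
  also have "\<dots> \<le> M * (real n ^ 2 * (b - a)^2 * M ^ (n - 1)) + real (Suc n) * M ^ n * (b-a)^2"
    by (intro add_mono mult_mono Suc mult_right_mono mult_left_mono an) (use assms M0 in auto)
  also have "\<dots> \<le> real (Suc n) ^ 2 * (b - a)^2 * M ^ (Suc n - 1)"
  proof (cases n)
    case 0 then show ?thesis by simp
  next
    case (Suc m)
    have "M * M ^ (n - 1) = M ^ n" using Suc by simp
    then have "M * (real n ^ 2 * (b - a)^2 * M ^ (n - 1)) + real (Suc n) * M ^ n * (b-a)^2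
       = (real n ^ 2 + real n + 1) * (b - a)^2 * M ^ n" by (simp add: algebra_simps)
    also have "\<dots> \<le> real (Suc n) ^ 2 * ((b - a)^2 * M ^ n)"
    proof -
      have "real n ^ 2 + real n + 1 \<le> real (Suc n) ^ 2" by (simp add: power2_eq_square algebra_simps)
      then show ?thesis using M0 by (simp add: mult.assoc mult_right_mono)
    qed
    finally show ?thesis by simp
  qed
  finally show ?case .
qed

lemma phi_bound:
  fixes x x' y y' :: "'a::real_inner"
  assumes "p \<ge> 2"
  shows "\<bar>(x' \<bullet> y') ^ p - (x \<bullet> y) ^ p - real p * (x \<bullet> y) ^ (p - 1) * (y \<bullet> (x' - x))
            - real p * (x \<bullet> y) ^ (p - 1) * (x \<bullet> (y' - y))\<bar>
     \<le> 9 * real p ^ 2 * ((norm (x' - x) * (norm y + norm y'))^2 + ((norm x + norm x') * norm (y' - y))^2)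
        * ((norm x + norm x') * (norm y + norm y')) ^ (p - 2)"
proof -
  define a where "a = x \<bullet> y"
  define b where "b = x' \<bullet> y'"
  define h where "h = x' - x"
  define k where "k = y' - y"
  define Sz where "Sz = norm x + norm x'"
  define Sw where "Sw = norm y + norm y'"
  define M where "M = Sz * Sw"
  define \<alpha> where "\<alpha> = norm h * Sw"
  define \<gamma> where "\<gamma> = Sz * norm k"
  obtain n where n: "p = Suc n" using assms by (cases p) auto
  have Sz0: "0 \<le> Sz" and Sw0: "0 \<le> Sw" unfolding Sz_def Sw_def by auto
  have M0: "0 \<le> M" unfolding M_def using Sz0 Sw0 by simp
  have a0: "0 \<le> \<alpha>" "0 \<le> \<gamma>" unfolding \<alpha>_def \<gamma>_def using Sz0 Sw0 by auto
  have hS: "norm h \<le> Sz" unfolding h_def Sz_def using norm_triangle_ineq4[of x' x] by linarith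
  have kS: "norm k \<le> Sw" unfolding k_def Sw_def using norm_triangle_ineq4[of y' y] by linarith
  have aM: "\<bar>a\<bar> \<le> M"
  proof -
    have "\<bar>a\<bar> \<le> norm x * norm y" unfolding a_def by (rule Cauchy_Schwarz_ineq2)
    also have "\<dots> \<le> Sz * Sw" unfolding Sz_def Sw_def by (intro mult_mono) auto
    finally show ?thesis unfolding M_def .
  qed
  have bM: "\<bar>b\<bar> \<le> M"
  proof -
    have "\<bar>b\<bar> \<le> norm x' * norm y'" unfolding b_def by (rule Cauchy_Schwarz_ineq2)
    also have "\<dots> \<le> Sz * Sw" unfolding Sz_def Sw_def by (intro mult_mono) auto
    finally show ?thesis unfolding M_def .
  qed
  have eqd: "b - a = y \<bullet> h + x \<bullet> k + h \<bullet> k"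
    unfolding a_def b_def h_def k_def by (simp add: inner_simps inner_commute)
  have bad: "\<bar>b - a\<bar> \<le> 2 * \<alpha> + \<gamma>"
  proof -
    have "\<bar>y \<bullet> h\<bar> \<le> norm h * Sw"
      using Cauchy_Schwarz_ineq2[of y h] unfolding Sw_def
      by (smt (verit) mult_right_mono norm_ge_zero mult.commute)
    moreover have "\<bar>x \<bullet> k\<bar> \<le> Sz * norm k"
      using Cauchy_Schwarz_ineq2[of x k] unfolding Sz_def
      by (smt (verit) mult_right_mono norm_ge_zero)
    moreover have "\<bar>h \<bullet> k\<bar> \<le> norm h * Sw"
      using Cauchy_Schwarz_ineq2[of h k] kS
      by (smt (verit) mult_left_mono norm_ge_zero)
    ultimately show ?thesis unfolding eqd \<alpha>_def \<gamma>_def by linarith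
  qed
  have sq: "(b - a)^2 \<le> 8 * (\<alpha>^2 + \<gamma>^2)"
  proof -
    have "(b - a)^2 = \<bar>b - a\<bar>^2" by simp
    also have "\<dots> \<le> (2 * \<alpha> + \<gamma>)^2" by (intro power_mono bad) auto
    also have "\<dots> \<le> 8 * (\<alpha>^2 + \<gamma>^2)"
    proof -
      have "8 * (\<alpha>^2 + \<gamma>^2) - (2 * \<alpha> + \<gamma>)^2 = (2 * \<alpha> - \<gamma>)^2 + 6 * \<gamma>^2"
        by (simp add: power2_eq_square algebra_simps)
      moreover have "0 \<le> (2 * \<alpha> - \<gamma>)^2" "0 \<le> \<gamma>^2" by auto
      ultimately show ?thesis by linarith
    qed
    finally show ?thesis .
  qed
  have f: "\<bar>b ^ p - a ^ p - real p * a ^ (p - 1) * (b - a)\<bar> \<le> real p ^ 2 * (8 * (\<alpha>^2 + \<gamma>^2)) * M ^ (p - 2)"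
  proof -
    have "\<bar>b ^ p - a ^ p - real p * a ^ (p - 1) * (b - a)\<bar> \<le> real n ^ 2 * (b - a)^2 * M ^ (n - 1)"
      using taylor_aux[OF aM bM, of n] n by simp
    also have "\<dots> \<le> real p ^ 2 * (8 * (\<alpha>^2 + \<gamma>^2)) * M ^ (p - 2)"
      using n by (intro mult_mono sq) (auto intro!: power_mono simp: M0)
    finally show ?thesis .
  qed
  have g: "\<bar>real p * a ^ (p - 1) * (h \<bullet> k)\<bar> \<le> real p * (\<alpha>^2 + \<gamma>^2) * M ^ (p - 2)"
  proof -
    have "\<bar>real p * a ^ (p - 1) * (h \<bullet> k)\<bar> = real p * \<bar>a\<bar> ^ (p - 1) * \<bar>h \<bullet> k\<bar>"
      by (simp add: abs_mult power_abs)
    also have "\<dots> \<le> real p * M ^ (p - 1) * (norm h * norm k)"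
      by (intro mult_mono power_mono aM Cauchy_Schwarz_ineq2) (auto simp: M0)
    also have "M ^ (p - 1) = M * M ^ (p - 2)" using assms n by (cases n) auto
    also have "real p * (M * M ^ (p - 2)) * (norm h * norm k) = real p * (\<alpha> * \<gamma>) * M ^ (p - 2)"
      unfolding M_def \<alpha>_def \<gamma>_def by (simp add: algebra_simps)
    also have "\<dots> \<le> real p * (\<alpha>^2 + \<gamma>^2) * M ^ (p - 2)"
    proof -
      have "2 * \<alpha> * \<gamma> \<le> \<alpha>^2 + \<gamma>^2" by (rule sum_squares_bound)
      moreover have "0 \<le> \<alpha> * \<gamma>" using a0 by simp
      ultimately have "\<alpha> * \<gamma> \<le> \<alpha>^2 + \<gamma>^2" by (simp add: mult.assoc)
      then show ?thesis using M0 by (intro mult_right_mono mult_left_mono) auto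
    qed
    finally show ?thesis .
  qed
  have eqphi: "b ^ p - a ^ p - real p * a ^ (p - 1) * (y \<bullet> h) - real p * a ^ (p - 1) * (x \<bullet> k)
     = (b ^ p - a ^ p - real p * a ^ (p - 1) * (b - a)) + real p * a ^ (p - 1) * (h \<bullet> k)"
    unfolding eqd by (simp add: algebra_simps)
  have "\<bar>b ^ p - a ^ p - real p * a ^ (p - 1) * (y \<bullet> h) - real p * a ^ (p - 1) * (x \<bullet> k)\<bar>
     \<le> real p ^ 2 * (8 * (\<alpha>^2 + \<gamma>^2)) * M ^ (p - 2) + real p * (\<alpha>^2 + \<gamma>^2) * M ^ (p - 2)"
    unfolding eqphi using f g by linarith
  also have "\<dots> \<le> 9 * real p ^ 2 * (\<alpha>^2 + \<gamma>^2) * M ^ (p - 2)"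
  proof -
    have "real p \<le> real p ^ 2" using assms by (simp add: power2_eq_square)
    then have "real p * ((\<alpha>^2 + \<gamma>^2) * M ^ (p - 2)) \<le> real p ^ 2 * ((\<alpha>^2 + \<gamma>^2) * M ^ (p - 2))"
      by (intro mult_right_mono) (auto simp: M0)
    then show ?thesis by (simp add: algebra_simps)
  qed
  finally show ?thesis unfolding a_def b_def h_def k_def Sz_def Sw_def M_def \<alpha>_def \<gamma>_def .
qed



lemma meas_cont:
  assumes "sets M = sets (borel::'b::topological_space measure)" "continuous_on UNIV (f :: 'b \<Rightarrow> 'c::topological_space)"
  shows "f \<in> borel_measurable M"
proof -
  have "f \<in> borel_measurable borel" by (rule borel_measurable_continuous_onI[OF assms(2)])
  then show ?thesis by (simp add: measurable_cong_sets[OF assms(1) refl])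
qed

lemma sets_pair_borel:
  assumes "sets M = sets (borel::'b::second_countable_topology measure)"
          "sets N = sets (borel::'c::second_countable_topology measure)"
  shows "sets (M \<Otimes>\<^sub>M N) = sets (borel :: ('b \<times> 'c) measure)"
proof -
  have "sets (M \<Otimes>\<^sub>M N) = sets (borel \<Otimes>\<^sub>M borel :: ('b\<times>'c) measure)" by (rule sets_pair_measure_cong[OF assms])
  also have "(borel \<Otimes>\<^sub>M borel :: ('b\<times>'c) measure) = borel" by (rule borel_prod)
  finally show ?thesis .
qed

lemma powr_nat0: "0 < p \<Longrightarrow> 0 \<le> (t::real) \<Longrightarrow> t powr real p = t ^ p"
  by (cases "t = 0") (auto simp: powr_realpow)

lemma moment_integrable:
  fixes M :: "'a::euclidean_space measure"
  assumes "M \<in> Pp (real p)" "p > 0"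
  shows "integrable M (\<lambda>x. norm x ^ p)"
proof -
  have M: "prob_space M" "sets M = sets borel" and fin: "(\<integral>\<^sup>+ x. ennreal (norm x powr real p) \<partial>M) < \<infinity>"
    using assms unfolding Pp_def by auto
  have "(\<lambda>x. norm x ^ p) \<in> borel_measurable M" by (rule meas_cont[OF M(2)]) (intro continuous_intros)
  moreover have "(\<integral>\<^sup>+ x. ennreal (norm (norm x ^ p)) \<partial>M) < \<infinity>"
    using fin by (simp add: powr_nat0[OF assms(2)])
  ultimately show ?thesis by (rule integrableI_bounded)
qed

lemma pair_prob: "prob_space M \<Longrightarrow> pair_prob_space M M"
  by (simp add: pair_prob_space_def pair_sigma_finite_def prob_space_imp_sigma_finite)

lemma prod_int:
  assumes P: "prob_space M" and U: "integrable M (U :: _ \<Rightarrow> real)" and V: "integrable M V"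
  shows "integrable (M \<Otimes>\<^sub>M M) (\<lambda>q. U (fst q) * V (snd q))"
    and "(\<integral>q. U (fst q) * V (snd q) \<partial>(M \<Otimes>\<^sub>M M)) = integral\<^sup>L M U * integral\<^sup>L M V"
proof -
  interpret P: pair_prob_space M M using pair_prob[OF P] .
  have [measurable]: "U \<in> borel_measurable M" "V \<in> borel_measurable M" using U V by auto
  show 1: "integrable (M \<Otimes>\<^sub>M M) (\<lambda>q. U (fst q) * V (snd q))"
  proof (rule P.Fubini_integrable)
    show "(\<lambda>q. U (fst q) * V (snd q)) \<in> borel_measurable (M \<Otimes>\<^sub>M M)" by measurable
    have "integrable M (\<lambda>x. \<bar>U x\<bar> * (\<integral>y. \<bar>V y\<bar> \<partial>M))"
      by (intro integrable_mult_left integrable_abs U)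
    then show "integrable M (\<lambda>x. \<integral>y. norm (U (fst (x, y)) * V (snd (x, y))) \<partial>M)"
      by (simp add: abs_mult)
    show "AE x in M. integrable M (\<lambda>y. U (fst (x, y)) * V (snd (x, y)))"
      using V by (auto intro!: integrable_mult_right)
  qed
  have "(\<integral>q. U (fst q) * V (snd q) \<partial>(M \<Otimes>\<^sub>M M)) = (\<integral>x. (\<integral>y. U x * V y \<partial>M) \<partial>M)"
    using P.integral_fst'[OF 1] by simp
  also have "\<dots> = integral\<^sup>L M U * integral\<^sup>L M V" by simp
  finally show "(\<integral>q. U (fst q) * V (snd q) \<partial>(M \<Otimes>\<^sub>M M)) = integral\<^sup>L M U * integral\<^sup>L M V" .
qed

lemma PFP_transfer:
  fixes T :: "'b \<Rightarrow> 'a::euclidean_space"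
  assumes P: "prob_space M" and T[measurable]: "T \<in> borel_measurable M" and ev: "even p"
    and int: "integrable (M \<Otimes>\<^sub>M M) (\<lambda>q. (T (fst q) \<bullet> T (snd q)) ^ p)"
  shows "PFP p (distr M borel T) = (\<integral>q. (T (fst q) \<bullet> T (snd q)) ^ p \<partial>(M \<Otimes>\<^sub>M M))"
proof -
  interpret P: pair_prob_space M M using pair_prob[OF P] .
  have inner: "\<And>x. (\<integral>y. \<bar>x \<bullet> y\<bar> ^ p \<partial>distr M borel T) = (\<integral>w. (x \<bullet> T w) ^ p \<partial>M)"
    by (subst integral_distr) (auto simp: power_even_abs[OF ev] intro!: borel_measurable_continuous_onI continuous_intros)
  have ms: "(\<lambda>x. \<integral>w. (x \<bullet> T w) ^ p \<partial>M) \<in> borel_measurable borel"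
    by (rule sigma_finite_measure.borel_measurable_lebesgue_integral[OF prob_space_imp_sigma_finite[OF P]]) measurable
  have "PFP p (distr M borel T) = (\<integral>x. (\<integral>w. (x \<bullet> T w) ^ p \<partial>M) \<partial>distr M borel T)"
    unfolding PFP_def inner ..
  also have "\<dots> = (\<integral>z. (\<integral>w. (T z \<bullet> T w) ^ p \<partial>M) \<partial>M)"
    by (rule integral_distr[OF _ ms]) simp
  also have "\<dots> = (\<integral>q. (T (fst q) \<bullet> T (snd q)) ^ p \<partial>(M \<Otimes>\<^sub>M M))"
    using P.integral_fst'[OF int] by simp
  finally show ?thesis .
qed

lemma g_pt:
  fixes x u :: "'a::real_inner" assumes "p > 0"
  shows "norm ((x \<bullet> u) ^ (p - 1) *\<^sub>R u) \<le> norm x ^ (p - 1) * norm u ^ p"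
proof -
  have "norm ((x \<bullet> u) ^ (p - 1) *\<^sub>R u) = \<bar>x \<bullet> u\<bar> ^ (p - 1) * norm u" by (simp add: power_abs)
  also have "\<dots> \<le> (norm x * norm u) ^ (p - 1) * norm u"
    by (intro mult_right_mono power_mono Cauchy_Schwarz_ineq2) auto
  also have "\<dots> = norm x ^ (p - 1) * norm u ^ p"
    using assms by (cases p) (auto simp: power_mult_distrib)
  finally show ?thesis .
qed

lemma g_integrable:
  fixes \<mu> :: "'a::euclidean_space measure"
  assumes "sets \<mu> = sets borel" "integrable \<mu> (\<lambda>u. norm u ^ p)" "p > 0"
  shows "integrable \<mu> (\<lambda>u. (x \<bullet> u) ^ (p - 1) *\<^sub>R u)"
proof (rule Bochner_Integration.integrable_bound)
  show "integrable \<mu> (\<lambda>u. norm x ^ (p - 1) * norm u ^ p)" using assms by auto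
  show "(\<lambda>u. (x \<bullet> u) ^ (p - 1) *\<^sub>R u) \<in> borel_measurable \<mu>"
    by (rule meas_cont[OF assms(1)]) (intro continuous_intros)
  show "AE u in \<mu>. norm ((x \<bullet> u) ^ (p - 1) *\<^sub>R u) \<le> norm (norm x ^ (p - 1) * norm u ^ p)"
    using g_pt[OF assms(3)] by auto
qed

lemma g_meas:
  fixes \<mu> :: "'a::euclidean_space measure"
  assumes "prob_space \<mu>" "sets \<mu> = sets borel"
  shows "gPFP p \<mu> \<in> borel_measurable borel"
proof -
  interpret prob_space \<mu> by fact
  have "(\<lambda>x. \<integral>u. (x \<bullet> u) ^ (p - 1) *\<^sub>R u \<partial>\<mu>) \<in> borel_measurable borel"
    by (rule borel_measurable_lebesgue_integral, rule meas_cont)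
       (auto simp: sets_pair_borel[OF refl assms(2)] case_prod_beta intro!: continuous_intros)
  then show ?thesis unfolding gPFP_def by measurable
qed

lemma g_norm:
  fixes \<mu> :: "'a::euclidean_space measure"
  assumes "sets \<mu> = sets borel" "integrable \<mu> (\<lambda>u. norm u ^ p)" "p > 0"
  shows "norm (gPFP p \<mu> x) \<le> 2 * real p * norm x ^ (p - 1) * (\<integral>u. norm u ^ p \<partial>\<mu>)"
proof -
  have "norm (gPFP p \<mu> x) = 2 * real p * norm (\<integral>u. (x \<bullet> u) ^ (p - 1) *\<^sub>R u \<partial>\<mu>)"
    unfolding gPFP_def by simp
  also have "norm (\<integral>u. (x \<bullet> u) ^ (p - 1) *\<^sub>R u \<partial>\<mu>) \<le> (\<integral>u. norm ((x \<bullet> u) ^ (p - 1) *\<^sub>R u) \<partial>\<mu>)"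
    by (rule integral_norm_bound)
  also have "\<dots> \<le> (\<integral>u. norm x ^ (p - 1) * norm u ^ p \<partial>\<mu>)"
    by (rule integral_mono[OF integrable_norm[OF g_integrable[OF assms]]]) (use assms g_pt[OF assms(3)] in auto)
  also have "\<dots> = norm x ^ (p - 1) * (\<integral>u. norm u ^ p \<partial>\<mu>)" by simp
  finally show ?thesis by (simp add: mult.assoc mult_left_mono)
qed

lemma g_inner:
  fixes \<mu> :: "'a::euclidean_space measure"
  assumes "sets \<mu> = sets borel" "integrable \<mu> (\<lambda>u. norm u ^ p)" "p > 0"
  shows "gPFP p \<mu> x \<bullet> v = 2 * real p * (\<integral>u. (x \<bullet> u) ^ (p - 1) * (u \<bullet> v) \<partial>\<mu>)"
proof -
  have "gPFP p \<mu> x \<bullet> v = 2 * real p * ((\<integral>u. (x \<bullet> u) ^ (p - 1) *\<^sub>R u \<partial>\<mu>) \<bullet> v)"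
    unfolding gPFP_def by simp
  also have "(\<integral>u. (x \<bullet> u) ^ (p - 1) *\<^sub>R u \<partial>\<mu>) \<bullet> v = (\<integral>u. ((x \<bullet> u) ^ (p - 1) *\<^sub>R u) \<bullet> v \<partial>\<mu>)"
    by (subst integral_inner_left) (use g_integrable[OF assms] in auto)
  finally show ?thesis by simp
qed



definition Sn :: "('a::real_normed_vector \<times> 'a \<times> 'a) \<Rightarrow> real" where
  "Sn z = norm (fst z) + norm (snd (snd z))"
definition hh :: "('a::real_normed_vector \<times> 'a \<times> 'a) \<Rightarrow> 'a" where
  "hh z = snd (snd z) - fst z"

lemma Sn_nonneg: "0 \<le> Sn z" unfolding Sn_def by auto
lemma X1_le_Sn: "norm (fst z) \<le> Sn z" unfolding Sn_def by auto
lemma X3_le_Sn: "norm (snd (snd z)) \<le> Sn z" unfolding Sn_def by auto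
lemma hh_le_Sn: "norm (hh z) \<le> Sn z" unfolding Sn_def hh_def using norm_triangle_ineq4[of "snd (snd z)" "fst z"] by linarith
lemma Sn_le: "Sn z \<le> 2 * norm (fst z) + norm (hh z)"
  unfolding Sn_def hh_def using norm_triangle_ineq[of "fst z" "snd (snd z) - fst z"] by simp

lemma pow_split: fixes h t s :: real assumes "2 \<le> p"
  shows "(h * t)^2 * (s * t)^(p - 2) = (h^2 * s^(p - 2)) * t^p"
proof -
  have "t ^ p = t^2 * t^(p-2)" using assms by (metis le_add_diff_inverse power_add)
  then show ?thesis by (simp add: power_mult_distrib algebra_simps)
qed

lemma pow_split2: fixes k t s :: real assumes "2 \<le> p"
  shows "(s * k)^2 * (s * t)^(p - 2) = s^p * (k^2 * t^(p - 2))"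
proof -
  have "s ^ p = s^2 * s^(p-2)" using assms by (metis le_add_diff_inverse power_add)
  then show ?thesis by (simp add: power_mult_distrib algebra_simps)
qed

lemma J_pt:
  fixes u v y k :: "'a::real_inner"
  assumes "norm u \<le> s" "norm v \<le> t" "norm y \<le> t" "norm k \<le> s" "0 < p"
  shows "\<bar>(u \<bullet> v) ^ (p - 1) * (y \<bullet> k)\<bar> \<le> 1 * (s ^ p * t ^ p)"
proof -
  have s0: "0 \<le> s" "0 \<le> t" using assms(1,2) norm_ge_zero order_trans by blast+
  have uv: "\<bar>u \<bullet> v\<bar> \<le> s * t"
  proof -
    have "\<bar>u \<bullet> v\<bar> \<le> norm u * norm v" by (rule Cauchy_Schwarz_ineq2)
    also have "\<dots> \<le> s * t" by (rule mult_mono) (use assms s0 in auto)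
    finally show ?thesis .
  qed
  have yk: "\<bar>y \<bullet> k\<bar> \<le> t * s"
  proof -
    have "\<bar>y \<bullet> k\<bar> \<le> norm y * norm k" by (rule Cauchy_Schwarz_ineq2)
    also have "\<dots> \<le> t * s" by (rule mult_mono) (use assms s0 in auto)
    finally show ?thesis .
  qed
  have "\<bar>(u \<bullet> v) ^ (p - 1) * (y \<bullet> k)\<bar> = \<bar>u \<bullet> v\<bar> ^ (p - 1) * \<bar>y \<bullet> k\<bar>" by (simp add: abs_mult power_abs)
  also have "\<dots> \<le> (s * t) ^ (p - 1) * (t * s)"
    by (intro mult_mono power_mono uv yk) (use s0 in auto)
  also have "\<dots> = s ^ p * t ^ p" using assms by (cases p) (auto simp: power_mult_distrib)
  finally show ?thesis by simp
qed

lemma J_pt2: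
  fixes u v y k :: "'a::real_inner"
  assumes "norm u \<le> s" "norm v \<le> t" "norm y \<le> s" "norm k \<le> t" "0 < p"
  shows "\<bar>(u \<bullet> v) ^ (p - 1) * (y \<bullet> k)\<bar> \<le> 1 * (s ^ p * t ^ p)"
proof -
  have s0: "0 \<le> s" "0 \<le> t" using assms(1,2) norm_ge_zero order_trans by blast+
  have uv: "\<bar>u \<bullet> v\<bar> \<le> s * t"
  proof -
    have "\<bar>u \<bullet> v\<bar> \<le> norm u * norm v" by (rule Cauchy_Schwarz_ineq2)
    also have "\<dots> \<le> s * t" by (rule mult_mono) (use assms s0 in auto)
    finally show ?thesis .
  qed
  have yk: "\<bar>y \<bullet> k\<bar> \<le> s * t"
  proof -
    have "\<bar>y \<bullet> k\<bar> \<le> norm y * norm k" by (rule Cauchy_Schwarz_ineq2)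
    also have "\<dots> \<le> s * t" by (rule mult_mono) (use assms s0 in auto)
    finally show ?thesis .
  qed
  have "\<bar>(u \<bullet> v) ^ (p - 1) * (y \<bullet> k)\<bar> = \<bar>u \<bullet> v\<bar> ^ (p - 1) * \<bar>y \<bullet> k\<bar>" by (simp add: abs_mult power_abs)
  also have "\<dots> \<le> (s * t) ^ (p - 1) * (s * t)"
    by (intro mult_mono power_mono uv yk) (use s0 in auto)
  also have "\<dots> = s ^ p * t ^ p" using assms by (cases p) (auto simp: power_mult_distrib)
  finally show ?thesis by simp
qed

lemma a_pt:
  fixes u v :: "'a::real_inner"
  assumes "norm u \<le> s" "norm v \<le> t"
  shows "\<bar>(u \<bullet> v) ^ p\<bar> \<le> 1 * (s ^ p * t ^ p)"
proof -
  have "\<bar>(u \<bullet> v) ^ p\<bar> = \<bar>u \<bullet> v\<bar> ^ p" by (simp add: power_abs)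
  also have "\<dots> \<le> (s * t) ^ p"
  proof (intro power_mono)
    have s0: "0 \<le> s" "0 \<le> t" using assms(1,2) norm_ge_zero order_trans by blast+
    have "\<bar>u \<bullet> v\<bar> \<le> norm u * norm v" by (rule Cauchy_Schwarz_ineq2)
    also have "\<dots> \<le> s * t" by (rule mult_mono) (use assms s0 in auto)
    finally show "\<bar>u \<bullet> v\<bar> \<le> s * t" .
  qed auto
  finally show ?thesis by (simp add: power_mult_distrib)
qed

context
  fixes p :: nat and \<beta> :: "('a::euclidean_space \<times> 'a \<times> 'a) measure"
  assumes p2: "2 < p" and bprob: "prob_space \<beta>" and bsets: "sets \<beta> = sets borel"
    and int1: "integrable \<beta> (\<lambda>z. norm (fst z) ^ p)"
    and int3: "integrable \<beta> (\<lambda>z. norm (snd (snd z)) ^ p)"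
begin

lemma Pmeas: "continuous_on UNIV f \<Longrightarrow> (f :: _ \<Rightarrow> real) \<in> borel_measurable (\<beta> \<Otimes>\<^sub>M \<beta>)"
  by (rule meas_cont[OF sets_pair_borel[OF bsets bsets]])

lemma Bmeas: "continuous_on UNIV f \<Longrightarrow> (f :: _ \<Rightarrow> real) \<in> borel_measurable \<beta>"
  by (rule meas_cont[OF bsets])

lemma contS: "continuous_on UNIV Sn" unfolding Sn_def by (intro continuous_intros)
lemma conth: "continuous_on UNIV hh" unfolding hh_def by (intro continuous_intros)

lemma intS: "integrable \<beta> (\<lambda>z. Sn z ^ p)"
proof (rule Bochner_Integration.integrable_bound)
  show "integrable \<beta> (\<lambda>z. 2 ^ p * (norm (fst z) ^ p + norm (snd (snd z)) ^ p))"
    using int1 int3 by auto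
  show "(\<lambda>z. Sn z ^ p) \<in> borel_measurable \<beta>" by (rule Bmeas) (intro continuous_intros contS)
  show "AE z in \<beta>. norm (Sn z ^ p) \<le> norm (2 ^ p * (norm (fst z) ^ p + norm (snd (snd z)) ^ p))"
    using sum_pow_le by (auto simp: Sn_def)
qed

lemma intH: "integrable \<beta> (\<lambda>z. norm (hh z) ^ p)"
proof (rule Bochner_Integration.integrable_bound[OF intS])
  show "(\<lambda>z. norm (hh z) ^ p) \<in> borel_measurable \<beta>" by (rule Bmeas) (intro continuous_intros conth)
  show "AE z in \<beta>. norm (norm (hh z) ^ p) \<le> norm (Sn z ^ p)"
  proof (rule AE_I2)
    fix z show "norm (norm (hh z) ^ p) \<le> norm (Sn z ^ p)"
      using hh_le_Sn[of z] Sn_nonneg[of z] by (auto intro!: power_mono simp: abs_of_nonneg)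
  qed
qed

lemma intA: "integrable \<beta> (\<lambda>z. norm (hh z)^2 * Sn z ^ (p - 2))"
proof (rule Bochner_Integration.integrable_bound[OF intS])
  show "(\<lambda>z. norm (hh z)^2 * Sn z ^ (p - 2)) \<in> borel_measurable \<beta>" by (rule Bmeas) (intro continuous_intros conth contS)
  have le: "norm (hh z)^2 * Sn z ^ (p - 2) \<le> Sn z ^ p" for z
  proof -
    have "norm (hh z)^2 * Sn z ^ (p - 2) \<le> Sn z ^ 2 * Sn z ^ (p - 2)"
      using hh_le_Sn[of z] Sn_nonneg[of z] by (intro mult_right_mono power_mono) auto
    also have "\<dots> = Sn z ^ p" using p2 by (metis le_add_diff_inverse less_imp_le power_add)
    finally show ?thesis .
  qed
  show "AE z in \<beta>. norm (norm (hh z)^2 * Sn z ^ (p - 2)) \<le> norm (Sn z ^ p)"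
  proof (rule AE_I2)
    fix z show "norm (norm (hh z)^2 * Sn z ^ (p - 2)) \<le> norm (Sn z ^ p)"
      using le[of z] Sn_nonneg[of z] by (simp add: abs_of_nonneg)
  qed
qed

lemma bound_int:
  assumes "continuous_on UNIV f" "\<And>q. \<bar>f q\<bar> \<le> c * (Sn (fst q) ^ p * Sn (snd q) ^ p)"
  shows "integrable (\<beta> \<Otimes>\<^sub>M \<beta>) f"
proof (rule Bochner_Integration.integrable_bound)
  show "integrable (\<beta> \<Otimes>\<^sub>M \<beta>) (\<lambda>q. (c * Sn (fst q) ^ p) * Sn (snd q) ^ p)"
    by (rule prod_int(1)[OF bprob _ intS]) (use intS in auto)
  show "f \<in> borel_measurable (\<beta> \<Otimes>\<^sub>M \<beta>)" by (rule Pmeas[OF assms(1)])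
  show "AE x in \<beta> \<Otimes>\<^sub>M \<beta>. norm (f x) \<le> norm (c * Sn (fst x) ^ p * Sn (snd x) ^ p)"
  proof (rule AE_I2)
    fix x show "norm (f x) \<le> norm (c * Sn (fst x) ^ p * Sn (snd x) ^ p)"
      using order_trans[OF assms(2)[of x] abs_ge_self] by (simp add: mult.assoc)
  qed
qed

lemma int_b: "integrable (\<beta> \<Otimes>\<^sub>M \<beta>) (\<lambda>q. (snd (snd (fst q)) \<bullet> snd (snd (snd q))) ^ p)"
proof (rule bound_int[of _ 1])
  show "continuous_on UNIV (\<lambda>q. (snd (snd (fst q)) \<bullet> snd (snd (snd q))) ^ p)" by (intro continuous_intros)
  fix q show "\<bar>(snd (snd (fst q)) \<bullet> snd (snd (snd q))) ^ p\<bar> \<le> 1 * (Sn (fst q) ^ p * Sn (snd q) ^ p)"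
    by (rule a_pt) (rule X3_le_Sn)+
qed

lemma int_a: "integrable (\<beta> \<Otimes>\<^sub>M \<beta>) (\<lambda>q. (fst (fst q) \<bullet> fst (snd q)) ^ p)"
proof (rule bound_int[of _ 1])
  show "continuous_on UNIV (\<lambda>q. (fst (fst q) \<bullet> fst (snd q)) ^ p)" by (intro continuous_intros)
  fix q show "\<bar>(fst (fst q) \<bullet> fst (snd q)) ^ p\<bar> \<le> 1 * (Sn (fst q) ^ p * Sn (snd q) ^ p)"
    by (rule a_pt) (rule X1_le_Sn)+
qed

lemma int_J: "integrable (\<beta> \<Otimes>\<^sub>M \<beta>) (\<lambda>q. (fst (fst q) \<bullet> fst (snd q)) ^ (p - 1) * (fst (snd q) \<bullet> hh (fst q)))"
proof (rule bound_int[of _ 1])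
  show "continuous_on UNIV (\<lambda>q. (fst (fst q) \<bullet> fst (snd q)) ^ (p - 1) * (fst (snd q) \<bullet> hh (fst q)))"
    unfolding hh_def by (intro continuous_intros)
  fix q show "\<bar>(fst (fst q) \<bullet> fst (snd q)) ^ (p - 1) * (fst (snd q) \<bullet> hh (fst q))\<bar> \<le> 1 * (Sn (fst q) ^ p * Sn (snd q) ^ p)"
    by (rule J_pt) (use p2 in \<open>auto intro: X1_le_Sn hh_le_Sn\<close>)
qed

lemma int_Js: "integrable (\<beta> \<Otimes>\<^sub>M \<beta>) (\<lambda>q. (fst (fst q) \<bullet> fst (snd q)) ^ (p - 1) * (fst (fst q) \<bullet> hh (snd q)))"
proof (rule bound_int[of _ 1])
  show "continuous_on UNIV (\<lambda>q. (fst (fst q) \<bullet> fst (snd q)) ^ (p - 1) * (fst (fst q) \<bullet> hh (snd q)))"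
    unfolding hh_def by (intro continuous_intros)
  fix q show "\<bar>(fst (fst q) \<bullet> fst (snd q)) ^ (p - 1) * (fst (fst q) \<bullet> hh (snd q))\<bar> \<le> 1 * (Sn (fst q) ^ p * Sn (snd q) ^ p)"
    by (rule J_pt2) (use p2 in \<open>auto intro: X1_le_Sn hh_le_Sn\<close>)
qed

lemma remainder:
  "\<bar>(\<integral>q. (snd (snd (fst q)) \<bullet> snd (snd (snd q))) ^ p \<partial>(\<beta> \<Otimes>\<^sub>M \<beta>))
    - (\<integral>q. (fst (fst q) \<bullet> fst (snd q)) ^ p \<partial>(\<beta> \<Otimes>\<^sub>M \<beta>))
    - 2 * real p * (\<integral>q. (fst (fst q) \<bullet> fst (snd q)) ^ (p - 1) * (fst (snd q) \<bullet> hh (fst q)) \<partial>(\<beta> \<Otimes>\<^sub>M \<beta>))\<bar>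
   \<le> 18 * real p ^ 2 * (\<integral>z. norm (hh z)^2 * Sn z ^ (p - 2) \<partial>\<beta>) * (\<integral>z. Sn z ^ p \<partial>\<beta>)"
proof -
  interpret P: pair_prob_space \<beta> \<beta> using pair_prob[OF bprob] .
  define A where "A z = norm (hh z)^2 * Sn z ^ (p - 2)" for z :: "'a \<times> 'a \<times> 'a"
  define B where "B z = Sn z ^ p" for z :: "'a \<times> 'a \<times> 'a"
  define a where "a q = fst (fst q) \<bullet> fst (snd q)" for q :: "('a \<times> 'a \<times> 'a) \<times> ('a \<times> 'a \<times> 'a)"
  define b where "b q = snd (snd (fst q)) \<bullet> snd (snd (snd q))" for q :: "('a \<times> 'a \<times> 'a) \<times> ('a \<times> 'a \<times> 'a)"
  define J where "J q = a q ^ (p - 1) * (fst (snd q) \<bullet> hh (fst q))" for q :: "('a \<times> 'a \<times> 'a) \<times> ('a \<times> 'a \<times> 'a)"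
  define Js where "Js q = a q ^ (p - 1) * (fst (fst q) \<bullet> hh (snd q))" for q :: "('a \<times> 'a \<times> 'a) \<times> ('a \<times> 'a \<times> 'a)"
  define \<Phi> where "\<Phi> q = b q ^ p - a q ^ p - real p * J q - real p * Js q" for q
  have ca: "continuous_on UNIV a" unfolding a_def by (intro continuous_intros)
  have cb: "continuous_on UNIV b" unfolding b_def by (intro continuous_intros)
  have cJ: "continuous_on UNIV J" unfolding J_def a_def hh_def by (intro continuous_intros)
  have cJs: "continuous_on UNIV Js" unfolding Js_def a_def hh_def by (intro continuous_intros)
  have ib: "integrable (\<beta> \<Otimes>\<^sub>M \<beta>) (\<lambda>q. b q ^ p)" using int_b unfolding b_def .
  have ia: "integrable (\<beta> \<Otimes>\<^sub>M \<beta>) (\<lambda>q. a q ^ p)" using int_a unfolding a_def .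
  have iJ: "integrable (\<beta> \<Otimes>\<^sub>M \<beta>) J" using int_J unfolding J_def a_def .
  have iJs: "integrable (\<beta> \<Otimes>\<^sub>M \<beta>) Js" using int_Js unfolding Js_def a_def .
  have swap: "integral\<^sup>L (\<beta> \<Otimes>\<^sub>M \<beta>) Js = integral\<^sup>L (\<beta> \<Otimes>\<^sub>M \<beta>) J"
  proof -
    have "(\<lambda>(x, y). J (y, x)) = Js" by (auto simp: fun_eq_iff J_def Js_def a_def inner_commute)
    then show ?thesis using P.integral_product_swap[OF Pmeas[OF cJ]] by simp
  qed
  have iA: "integrable \<beta> A" using intA unfolding A_def .
  have iB: "integrable \<beta> B" using intS unfolding B_def .
  have eq: "(\<integral>q. b q ^ p \<partial>(\<beta> \<Otimes>\<^sub>M \<beta>)) - (\<integral>q. a q ^ p \<partial>(\<beta> \<Otimes>\<^sub>M \<beta>)) - 2 * real p * integral\<^sup>L (\<beta> \<Otimes>\<^sub>M \<beta>) J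
      = integral\<^sup>L (\<beta> \<Otimes>\<^sub>M \<beta>) \<Phi>"
    unfolding \<Phi>_def using ib ia iJ iJs swap
    by (simp add: Bochner_Integration.integral_diff)
  have pt: "\<bar>\<Phi> q\<bar> \<le> 9 * real p ^ 2 * (A (fst q) * B (snd q) + B (fst q) * A (snd q))" for q
  proof -
    obtain x1 x2 x3 y1 y2 y3 where q: "q = ((x1, x2, x3), (y1, y2, y3))" by (metis prod.exhaust)
    have e0: "\<Phi> q = (x3 \<bullet> y3) ^ p - (x1 \<bullet> y1) ^ p - real p * (x1 \<bullet> y1) ^ (p - 1) * (y1 \<bullet> (x3 - x1))
            - real p * (x1 \<bullet> y1) ^ (p - 1) * (x1 \<bullet> (y3 - y1))"
      by (simp add: q \<Phi>_def J_def Js_def a_def b_def hh_def mult.assoc)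
    have e1: "(norm (x3 - x1) * (norm y1 + norm y3))^2 * ((norm x1 + norm x3) * (norm y1 + norm y3)) ^ (p - 2)
        = A (fst q) * B (snd q)"
      using pow_split[of p "norm (x3 - x1)" "norm y1 + norm y3" "norm x1 + norm x3"] p2
      by (simp add: q A_def B_def Sn_def hh_def)
    have e2: "((norm x1 + norm x3) * norm (y3 - y1))^2 * ((norm x1 + norm x3) * (norm y1 + norm y3)) ^ (p - 2)
        = B (fst q) * A (snd q)"
      using pow_split2[of p "norm x1 + norm x3" "norm (y3 - y1)" "norm y1 + norm y3"] p2
      by (simp add: q A_def B_def Sn_def hh_def)
    have dist: "\<And>X Y Z::real. 9 * real p ^ 2 * (X + Y) * Z = 9 * real p ^ 2 * (X * Z + Y * Z)"
      by (simp add: algebra_simps)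
    show ?thesis
      using phi_bound[where x=x1 and x'=x3 and y=y1 and y'=y3 and p=p] p2 unfolding e0 dist e1 e2 by simp
  qed
  have iAB: "integrable (\<beta> \<Otimes>\<^sub>M \<beta>) (\<lambda>q. A (fst q) * B (snd q))" by (rule prod_int(1)[OF bprob iA iB])
  have iBA: "integrable (\<beta> \<Otimes>\<^sub>M \<beta>) (\<lambda>q. B (fst q) * A (snd q))" by (rule prod_int(1)[OF bprob iB iA])
  have iPhi: "integrable (\<beta> \<Otimes>\<^sub>M \<beta>) \<Phi>" unfolding \<Phi>_def using ib ia iJ iJs by auto
  have "\<bar>integral\<^sup>L (\<beta> \<Otimes>\<^sub>M \<beta>) \<Phi>\<bar> \<le> (\<integral>q. \<bar>\<Phi> q\<bar> \<partial>(\<beta> \<Otimes>\<^sub>M \<beta>))" by (rule integral_abs_bound)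
  also have "\<dots> \<le> (\<integral>q. 9 * real p ^ 2 * (A (fst q) * B (snd q) + B (fst q) * A (snd q)) \<partial>(\<beta> \<Otimes>\<^sub>M \<beta>))"
    by (rule integral_mono) (use iPhi iAB iBA pt in auto)
  also have "\<dots> = 9 * real p ^ 2 * (integral\<^sup>L \<beta> A * integral\<^sup>L \<beta> B + integral\<^sup>L \<beta> B * integral\<^sup>L \<beta> A)"
    using iAB iBA prod_int(2)[OF bprob iA iB] prod_int(2)[OF bprob iB iA]
    by (simp add: Bochner_Integration.integral_add)
  also have "\<dots> = 18 * real p ^ 2 * integral\<^sup>L \<beta> A * integral\<^sup>L \<beta> B" by (simp add: algebra_simps)
  finally show ?thesis using eq unfolding A_def B_def a_def b_def J_def by simp
qed

lemma A_bound:
  defines "H \<equiv> \<integral>z. norm (hh z) ^ p \<partial>\<beta>"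
  shows "(\<integral>z. norm (hh z)^2 * Sn z ^ (p - 2) \<partial>\<beta>) \<le> (H powr (1 / real p))^2 * (1 + (\<integral>z. Sn z ^ p \<partial>\<beta>))"
proof (cases "H = 0")
  case True
  have "AE z in \<beta>. norm (hh z) ^ p = 0"
    using True intH unfolding H_def by (subst integral_nonneg_eq_0_iff_AE[symmetric]) auto
  then have "AE z in \<beta>. norm (hh z)^2 * Sn z ^ (p - 2) = 0" by auto
  then have "(\<integral>z. norm (hh z)^2 * Sn z ^ (p - 2) \<partial>\<beta>) = (\<integral>z. 0 \<partial>\<beta>)"
    by (intro integral_cong_AE) (auto intro!: Bmeas continuous_intros conth contS)
  then show ?thesis using True by simp
next
  case False
  have H0: "0 < H" using False intH unfolding H_def by (simp add: integral_nonneg order_less_le)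
  define r where "r = H powr (1 / real p)"
  have r0: "0 < r" unfolding r_def using H0 by simp
  have rp: "r ^ p = H" unfolding r_def using H0 p2
    by (simp add: powr_realpow[symmetric] powr_powr)
  have pt: "norm (hh z)^2 * Sn z ^ (p - 2) \<le> r^2 * (norm (hh z) ^ p / H + Sn z ^ p)" for z
  proof -
    have "norm (hh z)^2 * Sn z ^ (p - 2) = r^2 * ((norm (hh z) / r)^2 * Sn z ^ (p - 2))"
      using r0 by (simp add: power_divide)
    also have "\<dots> \<le> r^2 * ((norm (hh z) / r) ^ p + Sn z ^ p)"
      using young_max[of "norm (hh z) / r" "Sn z" 2 p] r0 p2 Sn_nonneg[of z] by (intro mult_left_mono) auto
    also have "(norm (hh z) / r) ^ p = norm (hh z) ^ p / H" by (simp add: power_divide rp)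
    finally show ?thesis .
  qed
  have "(\<integral>z. norm (hh z)^2 * Sn z ^ (p - 2) \<partial>\<beta>) \<le> (\<integral>z. r^2 * (norm (hh z) ^ p / H + Sn z ^ p) \<partial>\<beta>)"
    by (rule integral_mono) (use intA intH intS pt in auto)
  also have "\<dots> = r^2 * ((\<integral>z. norm (hh z) ^ p \<partial>\<beta>) / H + (\<integral>z. Sn z ^ p \<partial>\<beta>))"
    using intH intS by (simp add: Bochner_Integration.integral_add)
  also have "\<dots> = r^2 * (1 + (\<integral>z. Sn z ^ p \<partial>\<beta>))" using H0 unfolding H_def by simp
  finally show ?thesis unfolding r_def .
qed

lemma S_bound:
  "(\<integral>z. Sn z ^ p \<partial>\<beta>) \<le> 4 ^ p * (\<integral>z. norm (fst z) ^ p \<partial>\<beta>) + 2 ^ p * (\<integral>z. norm (hh z) ^ p \<partial>\<beta>)"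
proof -
  have pt: "Sn z ^ p \<le> 4 ^ p * norm (fst z) ^ p + 2 ^ p * norm (hh z) ^ p" for z
  proof -
    have "Sn z ^ p \<le> (2 * norm (fst z) + norm (hh z)) ^ p" using Sn_le[of z] Sn_nonneg[of z] by (intro power_mono) auto
    also have "\<dots> \<le> 2 ^ p * ((2 * norm (fst z)) ^ p + norm (hh z) ^ p)" by (rule sum_pow_le) auto
    also have "\<dots> = (2 ^ p * 2 ^ p) * norm (fst z) ^ p + 2 ^ p * norm (hh z) ^ p"
      by (simp add: power_mult_distrib algebra_simps)
    also have "(2 ^ p * 2 ^ p :: real) = 4 ^ p" by (simp flip: power_mult_distrib)
    finally show ?thesis .
  qed
  have "(\<integral>z. Sn z ^ p \<partial>\<beta>) \<le> (\<integral>z. 4 ^ p * norm (fst z) ^ p + 2 ^ p * norm (hh z) ^ p \<partial>\<beta>)"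
    by (rule integral_mono) (use intS int1 intH pt in auto)
  also have "\<dots> = 4 ^ p * (\<integral>z. norm (fst z) ^ p \<partial>\<beta>) + 2 ^ p * (\<integral>z. norm (hh z) ^ p \<partial>\<beta>)"
    using int1 intH by (simp add: Bochner_Integration.integral_add)
  finally show ?thesis .
qed

end


lemma rpow:
  assumes "0 \<le> (H::real)" "0 < p"
  shows "(H powr (1 / real p)) ^ p = H"
proof (cases "H = 0")
  case True then show ?thesis using assms by simp
next
  case False
  then have "(H powr (1 / real p)) ^ p = (H powr (1 / real p)) powr real p"
    using assms by (simp add: powr_realpow)
  also have "\<dots> = H" using assms False by (simp add: powr_powr)
  finally show ?thesis .
qed

theorem mainTheorem12:
  fixes p :: nat and \<mu> :: "'a::euclidean_space measure"
  assumes "even p" and "p > 2"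
    and "\<mu> \<in> Pp (real p)"
  shows "strongly_differentiable (real p) (PFP p) \<mu>
           (distr \<mu> borel (\<lambda>x. (x, gPFP p \<mu> x)))"
proof -
  note ev = assms(1) and p2 = assms(2) and muP = assms(3)
  have p0: "0 < p" using p2 by simp
  have mu: "prob_space \<mu>" "sets \<mu> = sets borel"
    and finmu: "(\<integral>\<^sup>+ x. ennreal (norm x powr real p) \<partial>\<mu>) < \<infinity>"
    using muP unfolding Pp_def by auto
  interpret mu: prob_space \<mu> by (rule mu(1))
  have intmu: "integrable \<mu> (\<lambda>x. norm x ^ p)" by (rule moment_integrable[OF muP p0])
  define m where "m = (\<integral>x. norm x ^ p \<partial>\<mu>)"
  have m0: "0 \<le> m" unfolding m_def by (intro Bochner_Integration.integral_nonneg) auto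
  have gm[measurable]: "gPFP p \<mu> \<in> borel_measurable borel" by (rule g_meas[OF mu])
  have fstb[measurable]: "fst \<in> borel_measurable (borel :: ('a \<times> 'a) measure)"
    by (intro borel_measurable_continuous_onI continuous_intros)
  have sndb[measurable]: "snd \<in> borel_measurable (borel :: ('a \<times> 'a) measure)"
    by (intro borel_measurable_continuous_onI continuous_intros)
  have Gb: "(\<lambda>x. (x, gPFP p \<mu> x)) \<in> borel_measurable borel" by measurable
  have Gm: "(\<lambda>x. (x, gPFP p \<mu> x)) \<in> measurable \<mu> borel"
    using Gb by (simp add: measurable_cong_sets[OF mu(2) refl])
  define \<gamma> where "\<gamma> = distr \<mu> borel (\<lambda>x. (x, gPFP p \<mu> x))"
  have dfst: "distr \<gamma> borel fst = \<mu>"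
  proof -
    have "distr \<gamma> borel fst = distr \<mu> borel (fst \<circ> (\<lambda>x. (x, gPFP p \<mu> x)))"
      unfolding \<gamma>_def by (rule distr_distr[OF fstb Gm])
    also have "\<dots> = distr \<mu> borel (\<lambda>x. x)" by (simp add: comp_def)
    also have "\<dots> = \<mu>" by (rule distr_id2) (simp add: mu(2))
    finally show ?thesis .
  qed
  have bpg: "borel_prob \<gamma>" unfolding borel_prob_def \<gamma>_def using mu.prob_space_distr[OF Gm] by simp
  have qmom: "(\<integral>\<^sup>+ z. ennreal (norm (snd z) powr (real p / (real p - 1))) \<partial>\<gamma>) < \<infinity>"
  proof -
    define q where "q = real p / (real p - 1)"
    define C where "C = (2 * real p * m) powr q"
    have q0: "0 < q" unfolding q_def using p2 by simp
    have qp: "real (p - 1) * q = real p" unfolding q_def using p2 by (simp add: of_nat_diff)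
    have C0: "0 \<le> C" unfolding C_def by simp
    have pt: "norm (gPFP p \<mu> x) powr q \<le> C * norm x powr real p" for x
    proof -
      have "norm (gPFP p \<mu> x) powr q \<le> (2 * real p * m * norm x ^ (p - 1)) powr q"
        by (rule powr_mono2) (use q0 g_norm[OF mu(2) intmu p0, of x] in \<open>auto simp: m_def mult_ac\<close>)
      also have "\<dots> = C * (norm x ^ (p - 1)) powr q" unfolding C_def using m0 by (simp add: powr_mult)
      also have "(norm x ^ (p - 1)) powr q = norm x powr real p"
      proof (cases "norm x = 0")
        case True then show ?thesis using q0 p2 by simp
      next
        case False
        then have "(norm x ^ (p - 1)) powr q = (norm x powr real (p - 1)) powr q" by (simp add: powr_realpow)
        also have "\<dots> = norm x powr (real (p - 1) * q)" by (simp add: powr_powr)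
        finally show ?thesis unfolding qp .
      qed
      finally show ?thesis .
    qed
    have mq: "(\<lambda>z. ennreal (norm (snd z) powr q)) \<in> borel_measurable (borel :: ('a \<times> 'a) measure)" by measurable
    have "(\<integral>\<^sup>+ z. ennreal (norm (snd z) powr q) \<partial>\<gamma>) = (\<integral>\<^sup>+ x. ennreal (norm (gPFP p \<mu> x) powr q) \<partial>\<mu>)"
      unfolding \<gamma>_def by (subst nn_integral_distr[OF Gm]) (simp_all add: mq)
    also have "\<dots> \<le> (\<integral>\<^sup>+ x. ennreal C * ennreal (norm x powr real p) \<partial>\<mu>)"
      by (intro nn_integral_mono) (use pt C0 in \<open>auto simp flip: ennreal_mult\<close>)
    also have "\<dots> = ennreal C * (\<integral>\<^sup>+ x. ennreal (norm x powr real p) \<partial>\<mu>)"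
      by (rule nn_integral_cmult) (simp add: measurable_cong_sets[OF mu(2) refl])
    also have "\<dots> < \<infinity>" using finmu by (simp add: ennreal_mult_less_top)
    finally show ?thesis unfolding q_def .
  qed
  define c0 where "c0 = 4 ^ p * m"
  define \<omega> where "\<omega> r = 18 * real p ^ 2 * r^2 * (1 + c0 + 2^p * r^p) * (c0 + 2^p * r^p)" for r :: real
  have lim: "((\<lambda>r. \<omega> r / r) \<longlongrightarrow> 0) (at_right 0)"
  proof -
    have "((\<lambda>r. 18 * real p ^ 2 * r * (1 + c0 + 2^p * r^p) * (c0 + 2^p * r^p))
        \<longlongrightarrow> 18 * real p ^ 2 * 0 * (1 + c0 + 2^p * 0^p) * (c0 + 2^p * 0^p)) (at_right 0)"
      by (intro tendsto_intros)
    then have "((\<lambda>r. 18 * real p ^ 2 * r * (1 + c0 + 2^p * r^p) * (c0 + 2^p * r^p)) \<longlongrightarrow> 0) (at_right 0)"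
      by simp
    moreover have "\<forall>\<^sub>F r in at_right 0. 18 * real p ^ 2 * r * (1 + c0 + 2^p * r^p) * (c0 + 2^p * r^p) = \<omega> r / r"
      using eventually_at_right_less[of "0::real"]
      by eventually_elim (simp add: \<omega>_def power2_eq_square)
    ultimately show ?thesis by (rule Lim_transform_eventually)
  qed
  have main: "\<forall>\<nu>\<in>Pp (real p). \<forall>\<beta>\<in>Gamma_set \<gamma> \<nu>.
     \<bar>PFP p \<nu> - PFP p \<mu> - (\<integral>z. (fst (snd z)) \<bullet> (snd (snd z) - fst z) \<partial>\<beta>)\<bar> \<le> \<omega> (Cpb (real p) \<beta>)"
  proof (intro ballI)
    fix \<nu> \<beta> assume nuP: "\<nu> \<in> Pp (real p)" and bG: "\<beta> \<in> Gamma_set \<gamma> \<nu>"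
    have bprob: "prob_space \<beta>" and bsets: "sets \<beta> = sets borel"
      and d12: "distr \<beta> borel (\<lambda>(x1, x2, x3). (x1, x2)) = \<gamma>" and d3: "distr \<beta> borel (\<lambda>(x1, x2, x3). x3) = \<nu>"
      using bG unfolding Gamma_set_def borel_prob_def by auto
    have e12: "(\<lambda>(x1::'a, x2::'a, x3::'a). (x1, x2)) = (\<lambda>z. (fst z, fst (snd z)))" by auto
    have e3: "(\<lambda>(x1::'a, x2::'a, x3::'a). x3) = (\<lambda>z. snd (snd z))" by auto
    have d12': "distr \<beta> borel (\<lambda>z. (fst z, fst (snd z))) = \<gamma>" using d12 unfolding e12 .
    have d3': "distr \<beta> borel (\<lambda>z. snd (snd z)) = \<nu>" using d3 unfolding e3 .
    have P12m: "(\<lambda>z. (fst z, fst (snd z))) \<in> measurable \<beta> (borel :: ('a \<times> 'a) measure)"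
      by (rule meas_cont[OF bsets]) (intro continuous_intros)
    have X1m: "fst \<in> measurable \<beta> (borel :: 'a measure)"
      by (rule meas_cont[OF bsets]) (intro continuous_intros)
    have X3m: "(\<lambda>z. snd (snd z)) \<in> measurable \<beta> (borel :: 'a measure)"
      by (rule meas_cont[OF bsets]) (intro continuous_intros)
    have d1: "distr \<beta> borel fst = \<mu>"
    proof -
      have "distr (distr \<beta> borel (\<lambda>z. (fst z, fst (snd z)))) borel fst = distr \<beta> borel (fst \<circ> (\<lambda>z. (fst z, fst (snd z))))"
        by (rule distr_distr[OF fstb P12m])
      then have "distr \<beta> borel fst = distr \<gamma> borel fst" using d12' by (simp add: comp_def)
      then show ?thesis using dfst by simp
    qed
    have setm: "{q \<in> space borel. snd q = gPFP p \<mu> (fst q)} \<in> sets (borel :: ('a \<times> 'a) measure)"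
      by measurable
    have AEg: "AE z in \<beta>. fst (snd z) = gPFP p \<mu> (fst z)"
    proof -
      have "AE q in \<gamma>. snd q = gPFP p \<mu> (fst q)" unfolding \<gamma>_def
        by (subst AE_distr_iff[OF Gm setm]) simp
      then have "AE q in distr \<beta> borel (\<lambda>z. (fst z, fst (snd z))). snd q = gPFP p \<mu> (fst q)"
        by (simp only: d12')
      then show ?thesis by (subst (asm) AE_distr_iff[OF P12m setm]) simp
    qed
    have nb: "(\<lambda>x. norm x ^ p) \<in> borel_measurable (borel :: 'a measure)"
      by (intro borel_measurable_continuous_onI continuous_intros)
    have int1: "integrable \<beta> (\<lambda>z. norm (fst z) ^ p)"
      using intmu unfolding d1[symmetric] by (subst (asm) integrable_distr_eq[OF X1m nb]) simp
    have int3: "integrable \<beta> (\<lambda>z. norm (snd (snd z)) ^ p)"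
      using moment_integrable[OF nuP p0] unfolding d3'[symmetric]
      by (subst (asm) integrable_distr_eq[OF X3m nb]) simp
    have m_eq: "(\<integral>z. norm (fst z) ^ p \<partial>\<beta>) = m"
      unfolding m_def d1[symmetric] by (subst integral_distr[OF X1m nb]) simp
    note ctx = p2 bprob bsets int1 int3
    have Fnu: "PFP p \<nu> = (\<integral>q. (snd (snd (fst q)) \<bullet> snd (snd (snd q))) ^ p \<partial>(\<beta> \<Otimes>\<^sub>M \<beta>))"
      using PFP_transfer[OF bprob X3m ev int_b[OF ctx]] d3' by simp
    have Fmu: "PFP p \<mu> = (\<integral>q. (fst (fst q) \<bullet> fst (snd q)) ^ p \<partial>(\<beta> \<Otimes>\<^sub>M \<beta>))"
      using PFP_transfer[OF bprob X1m ev int_a[OF ctx]] d1 by simp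
    have L: "(\<integral>z. fst (snd z) \<bullet> (snd (snd z) - fst z) \<partial>\<beta>)
       = 2 * real p * (\<integral>q. (fst (fst q) \<bullet> fst (snd q)) ^ (p - 1) * (fst (snd q) \<bullet> hh (fst q)) \<partial>(\<beta> \<Otimes>\<^sub>M \<beta>))"
    proof -
      interpret P: pair_prob_space \<beta> \<beta> using pair_prob[OF bprob] .
      have [measurable]: "(\<lambda>z. gPFP p \<mu> (fst z)) \<in> borel_measurable \<beta>"
        using measurable_compose[OF X1m gm] .
      have [measurable]: "hh \<in> borel_measurable \<beta>"
        by (rule meas_cont[OF bsets]) (unfold hh_def, intro continuous_intros)
      have "(\<integral>z. fst (snd z) \<bullet> (snd (snd z) - fst z) \<partial>\<beta>) = (\<integral>z. gPFP p \<mu> (fst z) \<bullet> hh z \<partial>\<beta>)"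
      proof (rule integral_cong_AE)
        show "(\<lambda>z. fst (snd z) \<bullet> (snd (snd z) - fst z)) \<in> borel_measurable \<beta>"
          by (rule meas_cont[OF bsets]) (intro continuous_intros)
        show "(\<lambda>z. gPFP p \<mu> (fst z) \<bullet> hh z) \<in> borel_measurable \<beta>" by measurable
        show "AE z in \<beta>. fst (snd z) \<bullet> (snd (snd z) - fst z) = gPFP p \<mu> (fst z) \<bullet> hh z"
          using AEg by eventually_elim (simp add: hh_def)
      qed
      also have "\<dots> = (\<integral>z. 2 * real p * (\<integral>w. (fst z \<bullet> fst w) ^ (p - 1) * (fst w \<bullet> hh z) \<partial>\<beta>) \<partial>\<beta>)"
      proof (rule Bochner_Integration.integral_cong[OF refl])
        fix z
        have "gPFP p \<mu> (fst z) \<bullet> hh z = 2 * real p * (\<integral>u. (fst z \<bullet> u) ^ (p - 1) * (u \<bullet> hh z) \<partial>\<mu>)"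
          by (rule g_inner[OF mu(2) intmu p0])
        also have "(\<integral>u. (fst z \<bullet> u) ^ (p - 1) * (u \<bullet> hh z) \<partial>\<mu>) = (\<integral>w. (fst z \<bullet> fst w) ^ (p - 1) * (fst w \<bullet> hh z) \<partial>\<beta>)"
          unfolding d1[symmetric] by (rule integral_distr[OF X1m]) (intro borel_measurable_continuous_onI continuous_intros)
        finally show "gPFP p \<mu> (fst z) \<bullet> hh z = 2 * real p * (\<integral>w. (fst z \<bullet> fst w) ^ (p - 1) * (fst w \<bullet> hh z) \<partial>\<beta>)" .
      qed
      also have "\<dots> = 2 * real p * (\<integral>z. (\<integral>w. (fst z \<bullet> fst w) ^ (p - 1) * (fst w \<bullet> hh z) \<partial>\<beta>) \<partial>\<beta>)"
        by simp
      also have "(\<integral>z. (\<integral>w. (fst z \<bullet> fst w) ^ (p - 1) * (fst w \<bullet> hh z) \<partial>\<beta>) \<partial>\<beta>)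
          = (\<integral>q. (fst (fst q) \<bullet> fst (snd q)) ^ (p - 1) * (fst (snd q) \<bullet> hh (fst q)) \<partial>(\<beta> \<Otimes>\<^sub>M \<beta>))"
        using P.integral_fst'[OF int_J[OF ctx]] by simp
      finally show ?thesis .
    qed
    define H where "H = (\<integral>z. norm (hh z) ^ p \<partial>\<beta>)"
    have intH': "integrable \<beta> (\<lambda>z. norm (hh z) ^ p)" by (rule intH[OF ctx])
    have H0: "0 \<le> H" unfolding H_def by (intro Bochner_Integration.integral_nonneg) auto
    have Cpb_eq: "Cpb (real p) \<beta> = H powr (1 / real p)"
    proof -
      have "enn2real (\<integral>\<^sup>+ z. ennreal (norm (fst z - snd (snd z)) powr real p) \<partial>\<beta>) = H"
        unfolding H_def
      proof (rule enn2real_nn_integral_eq_integral)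
        show "AE z in \<beta>. ennreal (norm (fst z - snd (snd z)) powr real p) = ennreal (norm (hh z) ^ p)"
          by (intro AE_I2) (simp add: hh_def norm_minus_commute powr_nat0[OF p0])
        show "(\<lambda>z. norm (hh z) ^ p) \<in> borel_measurable \<beta>" using intH' by auto
      qed auto
      then show ?thesis unfolding Cpb_def by simp
    qed
    define r where "r = H powr (1 / real p)"
    have r0: "0 \<le> r" unfolding r_def by simp
    have rp: "r ^ p = H" unfolding r_def by (rule rpow[OF H0 p0])
    define E where "E = (\<integral>z. Sn z ^ p \<partial>\<beta>)"
    define Ai where "Ai = (\<integral>z. norm (hh z)^2 * Sn z ^ (p - 2) \<partial>\<beta>)"
    have E0: "0 \<le> E" unfolding E_def by (intro Bochner_Integration.integral_nonneg) (simp add: Sn_nonneg)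
    have Ai0: "0 \<le> Ai" unfolding Ai_def by (intro Bochner_Integration.integral_nonneg) (simp add: Sn_nonneg)
    have R: "\<bar>PFP p \<nu> - PFP p \<mu> - (\<integral>z. (fst (snd z)) \<bullet> (snd (snd z) - fst z) \<partial>\<beta>)\<bar> \<le> 18 * real p ^ 2 * Ai * E"
      unfolding Fnu Fmu L Ai_def E_def by (rule remainder[OF ctx])
    have Ab: "Ai \<le> r^2 * (1 + E)" unfolding Ai_def E_def r_def H_def by (rule A_bound[OF ctx])
    have Eb: "E \<le> c0 + 2^p * r^p" unfolding E_def c0_def rp H_def
      using S_bound[OF ctx] m_eq by simp
    have "18 * real p ^ 2 * Ai * E \<le> 18 * real p ^ 2 * (r^2 * (1 + E)) * E"
      by (intro mult_right_mono mult_left_mono Ab E0) auto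
    also have "\<dots> = 18 * real p ^ 2 * r^2 * (1 + E) * E" by (simp add: mult_ac)
    also have "\<dots> \<le> 18 * real p ^ 2 * r^2 * (1 + c0 + 2^p * r^p) * (c0 + 2^p * r^p)"
      by (intro mult_mono Eb) (use E0 r0 Eb in auto)
    finally show "\<bar>PFP p \<nu> - PFP p \<mu> - (\<integral>z. (fst (snd z)) \<bullet> (snd (snd z) - fst z) \<partial>\<beta>)\<bar> \<le> \<omega> (Cpb (real p) \<beta>)"
      using R unfolding \<omega>_def Cpb_eq r_def[symmetric] by linarith
  qed
  show ?thesis unfolding strongly_differentiable_def \<gamma>_def[symmetric]
    using bpg dfst qmom lim main by blast
qed


end
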